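(* Let $\varepsilon\in(0,\varepsilon_0]$. Then for every $\alpha$ with $0<\alpha\le\varepsilon(1-\omega\varepsilon)$, one has $\mathbb D_\varepsilon\subset\mathbb D_\alpha$.
   Context: Let $\mathfrak I=(a,b)\subset\mathbb R$ be a bounded interval, $\mathcal H=L^2(\mathfrak I)$ with inner product $\langle\cdot,\cdot\rangle$ and norm $\|\cdot\|$. Let $A=-\partial_{xx}$ with domain $H^2(\mathfrak I)\cap H^1_0(\mathfrak I)$, $\lambda_1>0$ its first eigenvalue, $\mathcal H^r=D(A^{r/2})$, $\|u\|_r=\|A^{r/2}u\|$, $B=I+A$, and on $\mathcal H^r$ the inner product $(u,v)_r=\langle A^{(r-1)/2}B^{1/2}u,A^{(r-1)/2}B^{1/2}v\rangle$ with norm $|||u|||_r^2=\|u\|_{r-1}^2+\|u\|_r^2$. Set $\omega=\sqrt{(1+\lambda_1)/\lambda_1}$. Let $\mu:(0,\infty)\to[0,\infty)$, $\mu\not\equiv0$, nonincreasing, absolutely continuous, with $\kappa:=\int_0^\infty\mu(s)\,ds\in(0,\infty)$, $\int_0^\infty s\mu(s)\,ds=1$, $\lim_{s\to0^+}\mu(s)<\infty$, and $\mu'+\delta\mu\le0$ a.e. for some $\delta>0$. $\mathcal M=L^2_\mu(\mathbb R^+;\mathcal H^1)$ with norm $\|\eta\|_{\mathcal M}^2=\int_0^\infty\mu(s)\|\eta(s)\|_1^2ds$; $\mathbf H=\mathcal H^1\times\mathcal M$ with $\|(u,\eta)\|_{\mathbf H}^2=|||u|||_1^2+\|\eta\|_{\mathcal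 M}^2$. $T\eta=-\partial_s\eta$ with domain $\{\eta\in\mathcal M:\partial_s\eta\in\mathcal M,\ \lim_{s\to0}\|\eta(s)\|_1=0\}$. For $f\in L^2(\mathfrak I)$, $S(t)$ is the strongly continuous semigroup on $\mathbf H$ generated by $Bu_t+u_x+\int_0^\infty\mu(s)A\eta(s)\,ds+uu_x=f$, $\eta_t=T\eta+u$ (Dirichlet conditions on $u$), $S(t)z=(u(t),\eta^t)$. Let $F(x)=\int_a^xf(y)\,dy$ and for $\varepsilon>0$, $z=(u,\eta)\in\mathbf H$, $$\Lambda_\varepsilon(z)=\|z\|_{\mathbf H}^2+\frac2\kappa\int_0^\infty\mu(s)\langle F,\eta_x(s)\rangle\,ds+\frac2\kappa\|F\|^2-\frac{\varepsilon}{\sqrt\kappa}\int_0^\infty\mu(s)(u,\eta(s))_1\,ds.$$ Let $c_1,c_2,c_3>0$ and $\varepsilon_0\in(0,\frac1{2\omega})$ be constants depending only on $\mathfrak I,\mu$ such that for every $z\in\mathbf H$ and $\varepsilon\in(0,\varepsilon_0]$, $\mathcal L_\varepsilon(t)=\Lambda_\varepsilon(S(t)z)$ satisfies $\mathcal L_\varepsilon'+\varepsilon c_1\mathcal L_\varepsilon\le c_2\|F\|^2+c_3\varepsilon^2\mathcal L_\varepsilon^2$ for all $t\ge0$. Standing assumption: $\|F\|<\frac{c_1}{2\sqrt{c_2c_3}}$. Set $c_*=\sqrt{c_2/c_3}\,\big(\frac{c_1}{\sqrt{c_2c_3}}-\|F\|\big)>0$ and, for $\varepsilon>0$, $\mathbb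 D_\varepsilon=\{z\in\mathbf H:\Lambda_\varepsilon(z)\le c_*/\varepsilon\}$. *)

theory Defs
  imports "HOL-Analysis.Analysis"
begin

definition abs_cont_on :: "real set \<Rightarrow> (real \<Rightarrow> real) \<Rightarrow> bool" where
  "abs_cont_on S g \<longleftrightarrow>
     (\<forall>e>0. \<exists>d>0. \<forall>(n::nat) (x::nat \<Rightarrow> real) (y::nat \<Rightarrow> real).
        (\<forall>i<n. x i \<in> S \<and> y i \<in> S \<and> x i < y i) \<and>
        (\<forall>i<n. \<forall>j<n. i \<noteq> j \<longrightarrow> {x i<..<y i} \<inter> {x j<..<y j} = {}) \<and>
        (\<Sum>i<n. y i - x i) < d
        \<longrightarrow> (\<Sum>i<n. \<bar>g (y i) - g (x i)\<bar>) < e)"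

definition L2fun :: "real \<Rightarrow> real \<Rightarrow> (real \<Rightarrow> real) \<Rightarrow> bool" where
  "L2fun a b g \<longleftrightarrow> set_borel_measurable lborel {a..b} g \<and>
                    set_integrable lborel {a..b} (\<lambda>x. (g x)\<^sup>2)"

definition L2ip :: "real \<Rightarrow> real \<Rightarrow> (real \<Rightarrow> real) \<Rightarrow> (real \<Rightarrow> real) \<Rightarrow> real" where
  "L2ip a b g h = (LINT x:{a..b}|lborel. g x * h x)"

definition L2norm :: "real \<Rightarrow> real \<Rightarrow> (real \<Rightarrow> real) \<Rightarrow> real" where
  "L2norm a b g = sqrt (L2ip a b g g)"

definition is_wderiv :: "real \<Rightarrow> real \<Rightarrow> (real \<Rightarrow> real) \<Rightarrow> (real \<Rightarrow> real) \<Rightarrow> bool" where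
  "is_wderiv a b u g \<longleftrightarrow> L2fun a b g \<and> (\<forall>x\<in>{a..b}. u x = (LBINT y=a..x. g y))"

definition H10 :: "real \<Rightarrow> real \<Rightarrow> (real \<Rightarrow> real) set" where
  "H10 a b = {u. (\<exists>g. is_wderiv a b u g) \<and> u b = 0}"

definition wderiv :: "real \<Rightarrow> real \<Rightarrow> (real \<Rightarrow> real) \<Rightarrow> (real \<Rightarrow> real)" where
  "wderiv a b u = (SOME g. is_wderiv a b u g)"

text \<open>\<open>\<parallel>u\<parallel>_1 = \<parallel>A^(1/2) u\<parallel> = \<parallel>u_x\<parallel>\<close>\<close>
definition norm1 :: "real \<Rightarrow> real \<Rightarrow> (real \<Rightarrow> real) \<Rightarrow> real" where
  "norm1 a b u = L2norm a b (wderiv a b u)"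

text \<open>\<open>(u,v)_1 = <B^(1/2) u, B^(1/2) v> = <u,v> + <u_x,v_x>\<close>\<close>
definition ip1 :: "real \<Rightarrow> real \<Rightarrow> (real \<Rightarrow> real) \<Rightarrow> (real \<Rightarrow> real) \<Rightarrow> real" where
  "ip1 a b u v = L2ip a b u v + L2ip a b (wderiv a b u) (wderiv a b v)"

definition tnorm1 :: "real \<Rightarrow> real \<Rightarrow> (real \<Rightarrow> real) \<Rightarrow> real" where
  "tnorm1 a b u = sqrt ((L2norm a b u)\<^sup>2 + (norm1 a b u)\<^sup>2)"

text \<open>First Dirichlet eigenvalue of \<open>-\<partial>_xx\<close> on (a,b).\<close>
definition lambda1 :: "real \<Rightarrow> real \<Rightarrow> real" where
  "lambda1 a b = (pi / (b - a))\<^sup>2"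

definition omega :: "real \<Rightarrow> real \<Rightarrow> real" where
  "omega a b = sqrt ((1 + lambda1 a b) / lambda1 a b)"

definition kernel_ok :: "(real \<Rightarrow> real) \<Rightarrow> bool" where
  "kernel_ok \<mu> \<longleftrightarrow>
     (\<forall>s>0. \<mu> s \<ge> 0) \<and> (\<exists>s>0. \<mu> s \<noteq> 0) \<and>
     (\<forall>s t. 0 < s \<longrightarrow> s \<le> t \<longrightarrow> \<mu> t \<le> \<mu> s) \<and>
     abs_cont_on {0<..} \<mu> \<and>
     set_integrable lborel {0<..} \<mu> \<and> (LINT s:{0<..}|lborel. \<mu> s) > 0 \<and>
     set_integrable lborel {0<..} (\<lambda>s. s * \<mu> s) \<and>
     (LINT s:{0<..}|lborel. s * \<mu> s) = 1 \<and>
     (\<exists>L. (\<mu> \<longlongrightarrow> L) (at_right 0)) \<and>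
     (\<exists>\<delta>>0. AE s in lborel. s > 0 \<longrightarrow>
          (\<exists>d. (\<mu> has_real_derivative d) (at s) \<and> d + \<delta> * \<mu> s \<le> 0))"

definition kappa :: "(real \<Rightarrow> real) \<Rightarrow> real" where
  "kappa \<mu> = (LINT s:{0<..}|lborel. \<mu> s)"

text \<open>\<open>\<M> = L^2_\<mu>(\<real>^+; \<H>^1)\<close>: weakly (= strongly, \<H>^1 separable) measurable,
  \<H>^1-valued, square integrable with weight \<mu>.\<close>
definition MM :: "real \<Rightarrow> real \<Rightarrow> (real \<Rightarrow> real) \<Rightarrow> (real \<Rightarrow> real \<Rightarrow> real) set" where
  "MM a b \<mu> = {\<eta>. (\<forall>s>0. \<eta> s \<in> H10 a b) \<and>
       (\<forall>v\<in>H10 a b. set_borel_measurable lborel {0<..} (\<lambda>s. ip1 a b v (\<eta> s))) \<and>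
       set_integrable lborel {0<..} (\<lambda>s. \<mu> s * (norm1 a b (\<eta> s))\<^sup>2)}"

definition Mnorm :: "real \<Rightarrow> real \<Rightarrow> (real \<Rightarrow> real) \<Rightarrow> (real \<Rightarrow> real \<Rightarrow> real) \<Rightarrow> real" where
  "Mnorm a b \<mu> \<eta> = sqrt (LINT s:{0<..}|lborel. \<mu> s * (norm1 a b (\<eta> s))\<^sup>2)"

type_synonym state = "(real \<Rightarrow> real) \<times> (real \<Rightarrow> real \<Rightarrow> real)"

definition HH :: "real \<Rightarrow> real \<Rightarrow> (real \<Rightarrow> real) \<Rightarrow> state set" where
  "HH a b \<mu> = {(u, \<eta>). u \<in> H10 a b \<and> \<eta> \<in> MM a b \<mu>}"

definition Hnorm :: "real \<Rightarrow> real \<Rightarrow> (real \<Rightarrow> real) \<Rightarrow> state \<Rightarrow> real" where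
  "Hnorm a b \<mu> z = sqrt ((tnorm1 a b (fst z))\<^sup>2 + (Mnorm a b \<mu> (snd z))\<^sup>2)"

definition primF :: "real \<Rightarrow> (real \<Rightarrow> real) \<Rightarrow> (real \<Rightarrow> real)" where
  "primF a f = (\<lambda>x. LBINT y=a..x. f y)"

definition Lambda :: "real \<Rightarrow> real \<Rightarrow> (real \<Rightarrow> real) \<Rightarrow> (real \<Rightarrow> real) \<Rightarrow> real \<Rightarrow> state \<Rightarrow> real" where
  "Lambda a b \<mu> f \<epsilon> z =
     (let F = primF a f; u = fst z; \<eta> = snd z; k = kappa \<mu> in
       (Hnorm a b \<mu> z)\<^sup>2
       + 2 / k * (LINT s:{0<..}|lborel. \<mu> s * L2ip a b F (wderiv a b (\<eta> s)))
       + 2 / k * (L2norm a b F)\<^sup>2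
       - \<epsilon> / sqrt k * (LINT s:{0<..}|lborel. \<mu> s * ip1 a b u (\<eta> s)))"

definition cstar :: "real \<Rightarrow> real \<Rightarrow> (real \<Rightarrow> real) \<Rightarrow> real \<Rightarrow> real \<Rightarrow> real \<Rightarrow> real" where
  "cstar a b f c1 c2 c3 =
     sqrt (c2 / c3) * (c1 / sqrt (c2 * c3) - L2norm a b (primF a f))"

definition DD :: "real \<Rightarrow> real \<Rightarrow> (real \<Rightarrow> real) \<Rightarrow> (real \<Rightarrow> real) \<Rightarrow> real \<Rightarrow> real \<Rightarrow> real \<Rightarrow> real \<Rightarrow> state set" where
  "DD a b \<mu> f c1 c2 c3 \<epsilon> = {z \<in> HH a b \<mu>. Lambda a b \<mu> f \<epsilon> z \<le> cstar a b f c1 c2 c3 / \<epsilon>}"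

end

theory Submission
  imports Defs
begin

lemma CS_integral:
  fixes f g :: "'a \<Rightarrow> real"
  assumes fm: "f \<in> borel_measurable M" and gm: "g \<in> borel_measurable M"
    and fi: "integrable M (\<lambda>x. (f x)\<^sup>2)" and gi: "integrable M (\<lambda>x. (g x)\<^sup>2)"
  shows "integrable M (\<lambda>x. f x * g x)"
    "(\<integral>x. f x * g x \<partial>M)\<^sup>2 \<le> (\<integral>x. (f x)\<^sup>2 \<partial>M) * (\<integral>x. (g x)\<^sup>2 \<partial>M)"
proof -
  show fgi: "integrable M (\<lambda>x. f x * g x)"
  proof (rule Bochner_Integration.integrable_bound[OF Bochner_Integration.integrable_add[OF fi gi]])
    show "(\<lambda>x. f x * g x) \<in> borel_measurable M" using fm gm by measurable
    show "AE x in M. norm (f x * g x) \<le> norm ((f x)\<^sup>2 + (g x)\<^sup>2)"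
    proof
      fix x
      have "2 * \<bar>f x * g x\<bar> \<le> (f x)\<^sup>2 + (g x)\<^sup>2"
        using sum_squares_bound[of "\<bar>f x\<bar>" "\<bar>g x\<bar>"] by (simp only: abs_mult power2_abs)
      then show "norm (f x * g x) \<le> norm ((f x)\<^sup>2 + (g x)\<^sup>2)" by simp
    qed
  qed
  define A where "A = (\<integral>x. (f x)\<^sup>2 \<partial>M)"
  define B where "B = (\<integral>x. f x * g x \<partial>M)"
  define C where "C = (\<integral>x. (g x)\<^sup>2 \<partial>M)"
  have quad: "0 \<le> A - 2 * t * B + t\<^sup>2 * C" for t
  proof -
    have "(\<integral>x. (f x - t * g x)\<^sup>2 \<partial>M) = (\<integral>x. (f x)\<^sup>2 - 2 * t * (f x * g x) + t\<^sup>2 * (g x)\<^sup>2 \<partial>M)"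
      by (intro Bochner_Integration.integral_cong refl) (simp add: power2_eq_square algebra_simps)
    also have "\<dots> = A - 2 * t * B + t\<^sup>2 * C"
      using fi gi fgi unfolding A_def B_def C_def
      by (simp add: Bochner_Integration.integral_diff Bochner_Integration.integral_add Bochner_Integration.integrable_diff Bochner_Integration.integrable_add)
    finally have eq: "(\<integral>x. (f x - t * g x)\<^sup>2 \<partial>M) = A - 2 * t * B + t\<^sup>2 * C" .
    have "0 \<le> (\<integral>x. (f x - t * g x)\<^sup>2 \<partial>M)" by (rule integral_nonneg_AE) simp
    then show ?thesis using eq by simp
  qed
  have Cnn: "0 \<le> C" unfolding C_def by (simp add: integral_nonneg_AE)
  show "B\<^sup>2 \<le> A * C"
  proof (cases "C = 0")
    case True
    show ?thesis
    proof (rule ccontr)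
      assume "\<not> ?thesis"
      then have "B \<noteq> 0" using True by simp
      have "0 \<le> A - 2 * ((A + 1) / B) * B" using quad[of "(A+1)/B"] True by simp
      then show False using \<open>B \<noteq> 0\<close> quad[of 0] True by simp
    qed
  next
    case False
    then have "C > 0" using Cnn by simp
    have "0 \<le> A - 2 * (B / C) * B + (B/C)\<^sup>2 * C" by (rule quad)
    also have "\<dots> = (A * C - B\<^sup>2) / C" using \<open>C > 0\<close> by (simp add: field_simps power2_eq_square)
    finally have "0 \<le> (A * C - B\<^sup>2) / C" .
    then show ?thesis using \<open>C > 0\<close> by (simp add: zero_le_divide_iff)
  qed
qed

lemma CS_set:
  fixes f g :: "'a \<Rightarrow> real"
  assumes fm: "set_borel_measurable M S f" and gm: "set_borel_measurable M S g"
    and fi: "set_integrable M S (\<lambda>x. (f x)\<^sup>2)" and gi: "set_integrable M S (\<lambda>x. (g x)\<^sup>2)"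
  shows "set_integrable M S (\<lambda>x. f x * g x)"
    "(LINT x:S|M. f x * g x)\<^sup>2 \<le> (LINT x:S|M. (f x)\<^sup>2) * (LINT x:S|M. (g x)\<^sup>2)"
proof -
  let ?f = "\<lambda>x. indicator S x *\<^sub>R f x" and ?g = "\<lambda>x. indicator S x *\<^sub>R g x"
  have sq: "\<And>(h::'a \<Rightarrow> real) x. (indicator S x *\<^sub>R h x)\<^sup>2 = indicator S x *\<^sub>R (h x)\<^sup>2"
    by (simp add: indicator_def power2_eq_square)
  have pr: "\<And>x. ?f x * ?g x = indicator S x *\<^sub>R (f x * g x)"
    by (simp add: indicator_def)
  have fm': "?f \<in> borel_measurable M" using fm unfolding set_borel_measurable_def .
  have gm': "?g \<in> borel_measurable M" using gm unfolding set_borel_measurable_def .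
  have fi': "integrable M (\<lambda>x. (?f x)\<^sup>2)" using fi unfolding set_integrable_def sq .
  have gi': "integrable M (\<lambda>x. (?g x)\<^sup>2)" using gi unfolding set_integrable_def sq .
  note R = CS_integral[OF fm' gm' fi' gi']
  show "set_integrable M S (\<lambda>x. f x * g x)" using R(1) unfolding set_integrable_def pr .
  show "(LINT x:S|M. f x * g x)\<^sup>2 \<le> (LINT x:S|M. (f x)\<^sup>2) * (LINT x:S|M. (g x)\<^sup>2)"
    using R(2) unfolding set_lebesgue_integral_def sq pr .
qed

lemma L2ip_sq_nonneg: "0 \<le> L2ip a b g g"
  unfolding L2ip_def set_lebesgue_integral_def
  by (rule integral_nonneg_AE) (simp add: indicator_def)

lemma L2norm_sq: "(L2norm a b g)\<^sup>2 = L2ip a b g g"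
  unfolding L2norm_def using L2ip_sq_nonneg by simp

lemma L2norm_nonneg: "0 \<le> L2norm a b g"
  unfolding L2norm_def using L2ip_sq_nonneg by simp

lemma L2ip_CS:
  assumes "L2fun a b g" "L2fun a b h"
  shows "\<bar>L2ip a b g h\<bar> \<le> L2norm a b g * L2norm a b h"
proof -
  have "(L2ip a b g h)\<^sup>2 \<le> L2ip a b g g * L2ip a b h h"
    using CS_set(2)[of lborel "{a..b}" g h] assms
    unfolding L2fun_def L2ip_def by (simp add: power2_eq_square)
  then have "sqrt ((L2ip a b g h)\<^sup>2) \<le> sqrt (L2ip a b g g * L2ip a b h h)"
    by (rule real_sqrt_le_mono)
  then show ?thesis unfolding L2norm_def by (simp add: real_sqrt_mult)
qed

lemma L2_meas_sub:
  fixes g :: "real \<Rightarrow> real"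
  assumes "set_borel_measurable lborel {a..b} g" "a \<le> c" "d \<le> b"
  shows "set_borel_measurable lborel {c..d} g"
proof -
  have "(\<lambda>x. indicator {c..d} x *\<^sub>R (indicator {a..b} x *\<^sub>R g x)) \<in> borel_measurable lborel"
    by (rule borel_measurable_scaleR[OF borel_measurable_indicator])
      (use assms(1) in \<open>auto simp: set_borel_measurable_def\<close>)
  moreover have "(\<lambda>x. indicator {c..d} x *\<^sub>R (indicator {a..b} x *\<^sub>R g x)) = (\<lambda>x. indicator {c..d} x *\<^sub>R g x)"
    using assms(2,3) by (auto simp: indicator_def fun_eq_iff)
  ultimately show ?thesis unfolding set_borel_measurable_def by simp
qed

lemma L2_L1:
  assumes g: "L2fun a b g" and "a \<le> c" "d \<le> b"
  shows "set_integrable lborel {c..d} g"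
proof -
  have one: "set_integrable lborel {a..b} (\<lambda>_. 1::real)"
    by (rule borel_integrable_atLeastAtMost') simp
  have "set_integrable lborel {a..b} (\<lambda>x. 1 + (g x)\<^sup>2)"
    using one g unfolding L2fun_def by (intro set_integral_add(1)) auto
  then have I: "integrable lborel (\<lambda>x. indicator {a..b} x *\<^sub>R (1 + (g x)\<^sup>2))"
    unfolding set_integrable_def .
  have "integrable lborel (\<lambda>x. indicator {a..b} x *\<^sub>R g x)"
  proof (rule Bochner_Integration.integrable_bound[OF I])
    show "(\<lambda>x. indicator {a..b} x *\<^sub>R g x) \<in> borel_measurable lborel"
      using g unfolding L2fun_def set_borel_measurable_def by blast
    show "AE x in lborel. norm (indicator {a..b} x *\<^sub>R g x) \<le> norm (indicator {a..b} x *\<^sub>R (1 + (g x)\<^sup>2))"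
    proof
      fix x
      have "\<bar>g x\<bar> \<le> 1 + (g x)\<^sup>2"
      proof -
        have "0 \<le> (\<bar>g x\<bar> - 1)\<^sup>2" by simp
        then have "0 \<le> (g x)\<^sup>2 - 2 * \<bar>g x\<bar> + 1" by (simp add: power2_diff)
        then show ?thesis by linarith
      qed
      then show "norm (indicator {a..b} x *\<^sub>R g x) \<le> norm (indicator {a..b} x *\<^sub>R (1 + (g x)\<^sup>2))"
        by (simp add: indicator_def)
    qed
  qed
  then have "set_integrable lborel {a..b} g" unfolding set_integrable_def .
  then show ?thesis by (rule set_integrable_subset) (use assms in auto)
qed

lemma L2_sq_sub:
  assumes g: "L2fun a b g" and "a \<le> c" "d \<le> b"
  shows "set_integrable lborel {c..d} (\<lambda>x. (g x)\<^sup>2)"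
  by (rule set_integrable_subset[of _ "{a..b}"]) (use assms in \<open>auto simp: L2fun_def\<close>)

lemma CS_interval:
  assumes g: "L2fun a b g" and "a \<le> c" "c \<le> d" "d \<le> b"
  shows "(LINT x:{c..d}|lborel. g x)\<^sup>2 \<le> (d - c) * (LINT x:{c..d}|lborel. (g x)\<^sup>2)"
proof -
  have m1: "set_borel_measurable lborel {c..d} (\<lambda>_. 1::real)"
    unfolding set_borel_measurable_def by measurable
  have mg: "set_borel_measurable lborel {c..d} g"
    by (rule L2_meas_sub[of a b]) (use g assms in \<open>auto simp: L2fun_def\<close>)
  have i1: "set_integrable lborel {c..d} (\<lambda>x. (1::real)\<^sup>2)"
    by (rule borel_integrable_atLeastAtMost') simp
  have "(LINT x:{c..d}|lborel. 1 * g x)\<^sup>2 \<le> (LINT x:{c..d}|lborel. (1::real)\<^sup>2) * (LINT x:{c..d}|lborel. (g x)\<^sup>2)"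
    by (rule CS_set(2)[OF m1 mg i1 L2_sq_sub[OF g assms(2,4)]])
  moreover have "(LINT x:{c..d}|lborel. (1::real)\<^sup>2) = d - c"
    using assms by (simp add: set_integral_const)
  ultimately show ?thesis by simp
qed

lemma prim_eq:
  assumes g: "L2fun a b g" and "a \<le> x" "x \<le> b"
  shows "(LBINT y=a..x. g y) = integral {a..x} g"
proof -
  have "(LBINT y=a..x. g y) = (LBINT y:{a..x}. g y)" using assms by (simp add: interval_integral_Icc)
  also have "\<dots> = integral {a..x} g"
    by (rule set_borel_integral_eq_integral(2)[OF L2_L1[OF g]]) (use assms in auto)
  finally show ?thesis .
qed

lemma L2_int_on:
  assumes g: "L2fun a b g" and "a \<le> c" "d \<le> b"
  shows "g integrable_on {c..d}"
  by (rule set_borel_integral_eq_integral(1)[OF L2_L1[OF g assms(2,3)]])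

lemma L2_sq_int_on:
  assumes g: "L2fun a b g" and "a \<le> c" "d \<le> b"
  shows "(\<lambda>x. (g x)\<^sup>2) integrable_on {c..d}"
    "(LINT x:{c..d}|lborel. (g x)\<^sup>2) = integral {c..d} (\<lambda>x. (g x)\<^sup>2)"
  by (rule set_borel_integral_eq_integral[OF L2_sq_sub[OF g assms(2,3)]])+

lemma prim_cont:
  assumes g: "L2fun a b g"
  shows "continuous_on {a..b} (\<lambda>x. LBINT y=a..x. g y)"
proof -
  have "continuous_on {a..b} (\<lambda>x. integral {a..x} g)"
    by (rule indefinite_integral_continuous_1[OF L2_int_on[OF g]]) auto
  then show ?thesis
    by (rule continuous_on_eq) (auto simp: prim_eq[OF g])
qed

lemma cont_L2fun:
  fixes u :: "real \<Rightarrow> real"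
  assumes "continuous_on {a..b} u"
  shows "L2fun a b u"
  unfolding L2fun_def set_borel_measurable_def
proof
  show "(\<lambda>x. indicator {a..b} x *\<^sub>R u x) \<in> borel_measurable lborel"
    using borel_measurable_continuous_on_indicator[OF _ assms] by simp
  show "set_integrable lborel {a..b} (\<lambda>x. (u x)\<^sup>2)"
    by (rule borel_integrable_atLeastAtMost') (intro continuous_intros assms)
qed

lemma wderiv_cont:
  assumes "is_wderiv a b u g"
  shows "continuous_on {a..b} u"
proof -
  have "continuous_on {a..b} (\<lambda>x. LBINT y=a..x. g y)"
    using assms unfolding is_wderiv_def by (intro prim_cont) auto
  then show ?thesis
    by (rule continuous_on_eq) (use assms in \<open>auto simp: is_wderiv_def\<close>)
qed

lemma wderiv_L2fun:
  assumes "is_wderiv a b u g"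
  shows "L2fun a b u"
  by (rule cont_L2fun[OF wderiv_cont[OF assms]])

lemma integral_lin:
  fixes a m G :: real
  assumes "a \<le> m"
  shows "integral {a..m} (\<lambda>x. (x - a) * G) = G * (m - a)\<^sup>2 / 2"
proof -
  have "((\<lambda>x. (x - a) * G) has_integral ((m - a)\<^sup>2 / 2 * G - (a - a)\<^sup>2 / 2 * G)) {a..m}"
    by (rule fundamental_theorem_of_calculus[OF assms])
      (auto intro!: derivative_eq_intros simp: has_real_derivative_iff_has_vector_derivative[symmetric] power2_eq_square field_simps)
  then have "integral {a..m} (\<lambda>x. (x - a) * G) = (m - a)\<^sup>2 / 2 * G - (a - a)\<^sup>2 / 2 * G"
    by (rule integral_unique)
  then show ?thesis by simp
qed

lemma integral_lin2:
  fixes m b G :: real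
  assumes "m \<le> b"
  shows "integral {m..b} (\<lambda>x. (b - x) * G) = G * (b - m)\<^sup>2 / 2"
proof -
  have "((\<lambda>x. (b - x) * G) has_integral ((-(b - b)\<^sup>2 / 2) * G - (-(b - m)\<^sup>2 / 2) * G)) {m..b}"
    by (rule fundamental_theorem_of_calculus[OF assms])
      (auto intro!: derivative_eq_intros simp: has_real_derivative_iff_has_vector_derivative[symmetric] power2_eq_square field_simps)
  then have "integral {m..b} (\<lambda>x. (b - x) * G) = (-(b - b)\<^sup>2 / 2) * G - (-(b - m)\<^sup>2 / 2) * G"
    by (rule integral_unique)
  then show ?thesis by simp
qed

lemma L2ip_sq: "L2ip a b u u = (LINT x:{a..b}|lborel. (u x)\<^sup>2)"
  unfolding L2ip_def by (simp add: power2_eq_square)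

lemma poincare:
  assumes w: "is_wderiv a b u g" and ub: "u b = 0" and ab: "a \<le> b"
  shows "L2ip a b u u \<le> (b - a)\<^sup>2 / 8 * L2ip a b g g"
proof -
  have g: "L2fun a b g" using w by (simp add: is_wderiv_def)
  have uL: "L2fun a b u" by (rule wderiv_L2fun[OF w])
  have cu: "continuous_on {a..b} u" by (rule wderiv_cont[OF w])
  have ueq: "u x = integral {a..x} g" if "a \<le> x" "x \<le> b" for x
    using w that prim_eq[OF g that] by (auto simp: is_wderiv_def)
  define m where "m = (a+b)/2"
  have am: "a \<le> m" "m \<le> b" using ab by (auto simp: m_def)
  define Gl where "Gl = integral {a..m} (\<lambda>x. (g x)\<^sup>2)"
  define Gr where "Gr = integral {m..b} (\<lambda>x. (g x)\<^sup>2)"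
  have left: "(u x)\<^sup>2 \<le> (x - a) * Gl" if "a \<le> x" "x \<le> m" for x
  proof -
    have "(LINT y:{a..x}|lborel. g y)\<^sup>2 \<le> (x - a) * (LINT y:{a..x}|lborel. (g y)\<^sup>2)"
      by (rule CS_interval[OF g]) (use that am in auto)
    moreover have "(LINT y:{a..x}|lborel. g y) = u x"
      using ueq[of x] set_borel_integral_eq_integral(2)[OF L2_L1[OF g, of a x]] that am by simp
    moreover have "(LINT y:{a..x}|lborel. (g y)\<^sup>2) \<le> Gl"
    proof -
      have "(LINT y:{a..x}|lborel. (g y)\<^sup>2) = integral {a..x} (\<lambda>y. (g y)\<^sup>2)"
        using L2_sq_int_on(2)[OF g, of a x] that am by simp
      also have "\<dots> \<le> Gl" unfolding Gl_def
        by (rule integral_subset_le) (use L2_sq_int_on(1)[OF g] that am in auto)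
      finally show ?thesis .
    qed
    moreover have "x - a \<ge> 0" using that by simp
    ultimately show ?thesis by (smt (verit) mult_left_mono)
  qed
  have right: "(u x)\<^sup>2 \<le> (b - x) * Gr" if "m \<le> x" "x \<le> b" for x
  proof -
    have "integral {a..x} g + integral {x..b} g = integral {a..b} g"
      using Henstock_Kurzweil_Integration.integral_combine[where a=a and c=x and b=b and f=g] L2_int_on[OF g, of a b] that am by auto
    moreover have "integral {a..b} g = 0" using ueq[of b] ub ab by simp
    ultimately have ux: "u x = - integral {x..b} g" using ueq[of x] that am by simp
    have "(LINT y:{x..b}|lborel. g y)\<^sup>2 \<le> (b - x) * (LINT y:{x..b}|lborel. (g y)\<^sup>2)"
      by (rule CS_interval[OF g]) (use that am in auto)
    moreover have "(LINT y:{x..b}|lborel. g y) = integral {x..b} g"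
      using set_borel_integral_eq_integral(2)[OF L2_L1[OF g, of x b]] that am by simp
    moreover have "(LINT y:{x..b}|lborel. (g y)\<^sup>2) \<le> Gr"
    proof -
      have "(LINT y:{x..b}|lborel. (g y)\<^sup>2) = integral {x..b} (\<lambda>y. (g y)\<^sup>2)"
        using L2_sq_int_on(2)[OF g, of x b] that am by simp
      also have "\<dots> \<le> Gr" unfolding Gr_def
        by (rule integral_subset_le) (use L2_sq_int_on(1)[OF g] that am in auto)
      finally show ?thesis .
    qed
    moreover have "b - x \<ge> 0" using that by simp
    ultimately show ?thesis using ux by (smt (verit) mult_left_mono power2_minus)
  qed
  have iu: "(\<lambda>x. (u x)\<^sup>2) integrable_on {c..d}" if "a \<le> c" "d \<le> b" for c d
    by (rule integrable_continuous_interval)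
      (intro continuous_intros continuous_on_subset[OF cu], use that in auto)
  have L: "integral {a..m} (\<lambda>x. (u x)\<^sup>2) \<le> Gl * (m - a)\<^sup>2 / 2"
  proof -
    have "integral {a..m} (\<lambda>x. (u x)\<^sup>2) \<le> integral {a..m} (\<lambda>x. (x - a) * Gl)"
      by (rule integral_le) (use iu am left in \<open>auto intro!: integrable_continuous_interval continuous_intros\<close>)
    then show ?thesis using integral_lin[OF am(1), of Gl] by linarith
  qed
  have R: "integral {m..b} (\<lambda>x. (u x)\<^sup>2) \<le> Gr * (b - m)\<^sup>2 / 2"
  proof -
    have "integral {m..b} (\<lambda>x. (u x)\<^sup>2) \<le> integral {m..b} (\<lambda>x. (b - x) * Gr)"
      by (rule integral_le) (use iu am right in \<open>auto intro!: integrable_continuous_interval continuous_intros\<close>)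
    then show ?thesis using integral_lin2[OF am(2), of Gr] by linarith
  qed
  have U: "integral {a..b} (\<lambda>x. (u x)\<^sup>2) = integral {a..m} (\<lambda>x. (u x)\<^sup>2) + integral {m..b} (\<lambda>x. (u x)\<^sup>2)"
    by (rule Henstock_Kurzweil_Integration.integral_combine[symmetric]) (use am iu in auto)
  have G: "integral {a..b} (\<lambda>x. (g x)\<^sup>2) = Gl + Gr"
    unfolding Gl_def Gr_def
    by (rule Henstock_Kurzweil_Integration.integral_combine[symmetric]) (use am L2_sq_int_on(1)[OF g] in auto)
  have e1: "L2ip a b u u = integral {a..b} (\<lambda>x. (u x)\<^sup>2)"
    using L2_sq_int_on(2)[OF uL, of a b] by (simp add: L2ip_sq)
  have e2: "L2ip a b g g = integral {a..b} (\<lambda>x. (g x)\<^sup>2)"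
    using L2_sq_int_on(2)[OF g, of a b] by (simp add: L2ip_sq)
  have mm: "(m - a)\<^sup>2 = (b - a)\<^sup>2 / 4" "(b - m)\<^sup>2 = (b - a)\<^sup>2 / 4"
    by (simp_all add: m_def power2_eq_square field_simps)
  show ?thesis using L R U G e1 e2 mm by (simp add: algebra_simps)
qed

lemma H10_wd: "u \<in> H10 a b \<Longrightarrow> is_wderiv a b u (wderiv a b u)"
  unfolding H10_def wderiv_def by (metis (mono_tags) mem_Collect_eq someI)

lemma H10_L2: "u \<in> H10 a b \<Longrightarrow> L2fun a b u"
  by (rule wderiv_L2fun[OF H10_wd])

lemma H10_L2d: "u \<in> H10 a b \<Longrightarrow> L2fun a b (wderiv a b u)"
  using H10_wd unfolding is_wderiv_def by blast

lemma H10_poinc: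
  assumes "u \<in> H10 a b" "a \<le> b"
  shows "(L2norm a b u)\<^sup>2 \<le> (b - a)\<^sup>2 / 8 * (norm1 a b u)\<^sup>2"
  unfolding L2norm_sq norm1_def
  by (rule poincare[OF H10_wd[OF assms(1)]]) (use assms in \<open>auto simp: H10_def\<close>)

lemma cs2:
  fixes x1 x2 y1 y2 :: real
  shows "x1 * y1 + x2 * y2 \<le> sqrt (x1\<^sup>2 + x2\<^sup>2) * sqrt (y1\<^sup>2 + y2\<^sup>2)"
proof -
  have "0 \<le> (x1 * y2 - x2 * y1)\<^sup>2" by simp
  then have "(x1 * y1 + x2 * y2)\<^sup>2 \<le> (x1\<^sup>2 + x2\<^sup>2) * (y1\<^sup>2 + y2\<^sup>2)"
    by (simp add: power2_eq_square algebra_simps)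
  then have "sqrt ((x1 * y1 + x2 * y2)\<^sup>2) \<le> sqrt ((x1\<^sup>2 + x2\<^sup>2) * (y1\<^sup>2 + y2\<^sup>2))"
    by (rule real_sqrt_le_mono)
  then show ?thesis by (simp add: real_sqrt_mult)
qed

lemma norm1_nonneg: "0 \<le> norm1 a b u"
  unfolding norm1_def by (rule L2norm_nonneg)

lemma tnorm1_nonneg: "0 \<le> tnorm1 a b u"
  unfolding tnorm1_def by simp

lemma ip1_bound:
  assumes u: "u \<in> H10 a b" and v: "v \<in> H10 a b" and ab: "a \<le> b"
  shows "\<bar>ip1 a b u v\<bar> \<le> tnorm1 a b u * (sqrt (1 + (b - a)\<^sup>2 / 8) * norm1 a b v)"
proof -
  have "\<bar>ip1 a b u v\<bar> \<le> \<bar>L2ip a b u v\<bar> + \<bar>L2ip a b (wderiv a b u) (wderiv a b v)\<bar>"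
    unfolding ip1_def by linarith
  also have "\<dots> \<le> L2norm a b u * L2norm a b v + norm1 a b u * norm1 a b v"
    unfolding norm1_def
    using L2ip_CS[OF H10_L2[OF u] H10_L2[OF v]] L2ip_CS[OF H10_L2d[OF u] H10_L2d[OF v]] by linarith
  also have "\<dots> \<le> tnorm1 a b u * tnorm1 a b v"
    unfolding tnorm1_def by (rule cs2)
  also have "tnorm1 a b v \<le> sqrt (1 + (b - a)\<^sup>2 / 8) * norm1 a b v"
  proof -
    have "(L2norm a b v)\<^sup>2 + (norm1 a b v)\<^sup>2 \<le> (1 + (b - a)\<^sup>2 / 8) * (norm1 a b v)\<^sup>2"
      using H10_poinc[OF v ab] by (simp add: algebra_simps)
    then have "tnorm1 a b v \<le> sqrt ((1 + (b - a)\<^sup>2 / 8) * (norm1 a b v)\<^sup>2)"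
      unfolding tnorm1_def by (rule real_sqrt_le_mono)
    then show ?thesis using norm1_nonneg[of a b v] by (simp add: real_sqrt_mult)
  qed
  then have "tnorm1 a b u * tnorm1 a b v \<le> tnorm1 a b u * (sqrt (1 + (b - a)\<^sup>2 / 8) * norm1 a b v)"
    by (rule mult_left_mono) (rule tnorm1_nonneg)
  finally show ?thesis .
qed

lemma set_abs_bound:
  fixes f g :: "'a \<Rightarrow> real"
  assumes gi: "set_integrable M S g" and fg: "\<And>x. x \<in> S \<Longrightarrow> \<bar>f x\<bar> \<le> g x"
  shows "\<bar>LINT x:S|M. f x\<bar> \<le> (LINT x:S|M. g x)"
proof (cases "set_integrable M S f")
  case True
  have fg1: "\<And>x. x \<in> S \<Longrightarrow> f x \<le> g x" and fg2: "\<And>x. x \<in> S \<Longrightarrow> - g x \<le> f x"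
    using fg by (force simp: abs_le_iff)+
  have "(LINT x:S|M. f x) \<le> (LINT x:S|M. g x)"
    using True gi unfolding set_integrable_def set_lebesgue_integral_def
    by (rule integral_mono) (use fg1 in \<open>auto simp: indicator_def\<close>)
  moreover have "(LINT x:S|M. - g x) \<le> (LINT x:S|M. f x)"
    using gi True unfolding set_integrable_def set_lebesgue_integral_def
    by (intro integral_mono) (use fg2 in \<open>auto simp: indicator_def\<close>)
  moreover have "(LINT x:S|M. - g x) = - (LINT x:S|M. g x)"
    unfolding set_lebesgue_integral_def by simp
  ultimately show ?thesis by linarith
next
  case False
  then have "(LINT x:S|M. f x) = 0"
    unfolding set_integrable_def set_lebesgue_integral_def by (rule not_integrable_integral_eq)
  moreover have "0 \<le> (LINT x:S|M. g x)"
    unfolding set_lebesgue_integral_def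
    by (rule integral_nonneg_AE) (use fg in \<open>auto simp: indicator_def intro!: AE_I2 order_trans[OF abs_ge_zero]\<close>)
  ultimately show ?thesis by simp
qed

lemma weighted_CS:
  fixes \<mu> h :: "real \<Rightarrow> real"
  assumes S: "S \<in> sets lborel" and mi: "set_integrable lborel S \<mu>" and mpos: "\<And>s. s \<in> S \<Longrightarrow> 0 \<le> \<mu> s"
    and hpos: "\<And>s. s \<in> S \<Longrightarrow> 0 \<le> h s" and mhi: "set_integrable lborel S (\<lambda>s. \<mu> s * (h s)\<^sup>2)"
  shows "set_integrable lborel S (\<lambda>s. \<mu> s * h s)"
    "(LINT s:S|lborel. \<mu> s * h s)\<^sup>2 \<le> (LINT s:S|lborel. \<mu> s) * (LINT s:S|lborel. \<mu> s * (h s)\<^sup>2)"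
proof -
  define f where "f = (\<lambda>s. sqrt (\<mu> s))"
  define g where "g = (\<lambda>s. sqrt (\<mu> s * (h s)\<^sup>2))"
  have m1[measurable]: "(\<lambda>s. indicator S s *\<^sub>R \<mu> s) \<in> borel_measurable borel"
    using borel_measurable_integrable[OF mi[unfolded set_integrable_def]] by simp
  have m2[measurable]: "(\<lambda>s. indicator S s *\<^sub>R (\<mu> s * (h s)\<^sup>2)) \<in> borel_measurable borel"
    using borel_measurable_integrable[OF mhi[unfolded set_integrable_def]] by simp
  have fm: "set_borel_measurable lborel S f"
  proof -
    have "(\<lambda>s. sqrt (indicator S s *\<^sub>R \<mu> s)) \<in> borel_measurable borel" by measurable
    moreover have "(\<lambda>s. sqrt (indicator S s *\<^sub>R \<mu> s)) = (\<lambda>s. indicator S s *\<^sub>R f s)"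
      by (auto simp: f_def indicator_def fun_eq_iff)
    ultimately show ?thesis unfolding set_borel_measurable_def by simp
  qed
  have gm: "set_borel_measurable lborel S g"
  proof -
    have "(\<lambda>s. sqrt (indicator S s *\<^sub>R (\<mu> s * (h s)\<^sup>2))) \<in> borel_measurable borel" by measurable
    moreover have "(\<lambda>s. sqrt (indicator S s *\<^sub>R (\<mu> s * (h s)\<^sup>2))) = (\<lambda>s. indicator S s *\<^sub>R g s)"
      by (auto simp: g_def indicator_def fun_eq_iff)
    ultimately show ?thesis unfolding set_borel_measurable_def by simp
  qed
  have f2: "\<And>s. s \<in> S \<Longrightarrow> (f s)\<^sup>2 = \<mu> s" using mpos by (simp add: f_def)
  have g2: "\<And>s. s \<in> S \<Longrightarrow> (g s)\<^sup>2 = \<mu> s * (h s)\<^sup>2" using mpos by (simp add: g_def)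
  have fg: "\<And>s. s \<in> S \<Longrightarrow> f s * g s = \<mu> s * h s"
  proof -
    fix s assume s: "s \<in> S"
    have "f s * g s = sqrt ((\<mu> s * h s)\<^sup>2)"
      by (simp add: f_def g_def real_sqrt_mult[symmetric] power2_eq_square algebra_simps)
    also have "\<dots> = \<mu> s * h s" using mpos[OF s] hpos[OF s] by simp
    finally show "f s * g s = \<mu> s * h s" .
  qed
  have fi: "set_integrable lborel S (\<lambda>x. (f x)\<^sup>2)"
    using mi by (subst set_integrable_cong[OF refl refl f2]) auto
  have gi: "set_integrable lborel S (\<lambda>x. (g x)\<^sup>2)"
    using mhi by (subst set_integrable_cong[OF refl refl g2]) auto
  note R = CS_set[OF fm gm fi gi]
  show "set_integrable lborel S (\<lambda>s. \<mu> s * h s)"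
    using R(1) by (subst (asm) set_integrable_cong[OF refl refl fg]) auto
  have e1: "(LINT s:S|lborel. f s * g s) = (LINT s:S|lborel. \<mu> s * h s)"
    by (rule set_lebesgue_integral_cong) (use S fg in auto)
  have e2: "(LINT s:S|lborel. (f s)\<^sup>2) = (LINT s:S|lborel. \<mu> s)"
    by (rule set_lebesgue_integral_cong) (use S f2 in auto)
  have e3: "(LINT s:S|lborel. (g s)\<^sup>2) = (LINT s:S|lborel. \<mu> s * (h s)\<^sup>2)"
    by (rule set_lebesgue_integral_cong) (use S g2 in auto)
  show "(LINT s:S|lborel. \<mu> s * h s)\<^sup>2 \<le> (LINT s:S|lborel. \<mu> s) * (LINT s:S|lborel. \<mu> s * (h s)\<^sup>2)"
    using R(2) unfolding e1 e2 e3 .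
qed

lemma const_cmp:
  assumes ab: "a < b"
  shows "sqrt (1 + (b - a)\<^sup>2 / 8) \<le> sqrt 2 * omega a b" "0 < omega a b"
proof -
  define L where "L = b - a"
  have L: "L > 0" using ab by (simp add: L_def)
  have lam: "lambda1 a b = pi\<^sup>2 / L\<^sup>2" by (simp add: lambda1_def L_def power_divide)
  have lpos: "lambda1 a b > 0" using L by (simp add: lam)
  have pi16: "pi\<^sup>2 \<le> 16"
  proof -
    have "pi * pi \<le> 4 * 4" using pi_less_4 pi_gt_zero by (intro mult_mono) auto
    then show ?thesis by (simp add: power2_eq_square)
  qed
  have "(1 + lambda1 a b) / lambda1 a b = 1 + L\<^sup>2 / pi\<^sup>2"
    using lpos L by (simp add: lam field_simps)
  moreover have "L\<^sup>2 / 8 \<le> 1 + 2 * (L\<^sup>2 / pi\<^sup>2)"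
  proof -
    have "L\<^sup>2 * pi\<^sup>2 \<le> L\<^sup>2 * 16" using pi16 by (intro mult_left_mono) auto
    then have "L\<^sup>2 / 8 \<le> 2 * (L\<^sup>2 / pi\<^sup>2)" by (simp add: field_simps)
    then show ?thesis by linarith
  qed
  ultimately have "1 + L\<^sup>2 / 8 \<le> 2 * ((1 + lambda1 a b) / lambda1 a b)" by simp
  then have "sqrt (1 + L\<^sup>2 / 8) \<le> sqrt (2 * ((1 + lambda1 a b) / lambda1 a b))"
    by (rule real_sqrt_le_mono)
  then have "sqrt (1 + (b - a)\<^sup>2 / 8) \<le> sqrt 2 * sqrt ((1 + lambda1 a b) / lambda1 a b)"
    unfolding L_def real_sqrt_mult .
  then show "sqrt (1 + (b - a)\<^sup>2 / 8) \<le> sqrt 2 * omega a b"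
    unfolding omega_def .
  show "0 < omega a b" using lpos by (simp add: omega_def)
qed

lemma key:
  assumes ab: "a < b" and f: "L2fun a b f" and mu: "kernel_ok \<mu>" and z: "z \<in> HH a b \<mu>"
  shows "\<exists>J. (\<forall>e. Lambda a b \<mu> f e z = Lambda a b \<mu> f 0 z - e * J) \<and> J \<le> omega a b * Lambda a b \<mu> f 0 z"
proof -
  obtain u \<eta> where zz: "z = (u, \<eta>)" by (cases z)
  have u: "u \<in> H10 a b" and eta: "\<eta> \<in> MM a b \<mu>" using z by (auto simp: zz HH_def)
  have etas: "\<And>s. s \<in> {0<..} \<Longrightarrow> \<eta> s \<in> H10 a b" using eta by (auto simp: MM_def)
  define k where "k = kappa \<mu>"
  have kpos: "k > 0" using mu by (simp add: k_def kappa_def kernel_ok_def)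
  have mi: "set_integrable lborel {0<..} \<mu>" using mu by (simp add: kernel_ok_def)
  have mpos: "\<And>s. s \<in> {0<..} \<Longrightarrow> 0 \<le> \<mu> s" using mu by (simp add: kernel_ok_def)
  define h where "h = (\<lambda>s. norm1 a b (\<eta> s))"
  have hpos: "\<And>s. 0 \<le> h s" by (simp add: h_def norm1_nonneg)
  have mhi: "set_integrable lborel {0<..} (\<lambda>s. \<mu> s * (h s)\<^sup>2)" using eta by (simp add: MM_def h_def)
  define F where "F = primF a f"
  define \<phi> where "\<phi> = L2norm a b F"
  have FL: "L2fun a b F" unfolding F_def primF_def by (rule cont_L2fun[OF prim_cont[OF f]])
  have phipos: "0 \<le> \<phi>" by (simp add: \<phi>_def L2norm_nonneg)
  note WCS = weighted_CS[of "{0<..}" \<mu> h, OF _ mi mpos hpos mhi, simplified]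
  define M1 where "M1 = (LINT s:{0<..}|lborel. \<mu> s * h s)"
  define N where "N = Mnorm a b \<mu> \<eta>"
  have Q2nn: "0 \<le> (LINT s:{0<..}|lborel. \<mu> s * (h s)\<^sup>2)"
    unfolding set_lebesgue_integral_def
    by (rule integral_nonneg_AE) (use mpos in \<open>auto simp: indicator_def intro!: AE_I2\<close>)
  have Mn: "Mnorm a b \<mu> \<eta> = sqrt (LINT s:{0<..}|lborel. \<mu> s * (h s)\<^sup>2)"
    by (simp add: Mnorm_def h_def)
  have Nsq: "N\<^sup>2 = (LINT s:{0<..}|lborel. \<mu> s * (h s)\<^sup>2)"
    using real_sqrt_pow2[OF Q2nn] Mn by (simp add: N_def)
  have Npos: "0 \<le> N" using Q2nn by (simp add: N_def Mn)
  have M1pos: "0 \<le> M1"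
    unfolding M1_def set_lebesgue_integral_def
    by (rule integral_nonneg_AE) (use mpos hpos in \<open>auto simp: indicator_def intro!: AE_I2\<close>)
  have M1sq: "M1\<^sup>2 \<le> k * N\<^sup>2" using WCS(2) by (simp add: M1_def Nsq k_def kappa_def)
  have M1le: "M1 \<le> sqrt k * N"
  proof -
    have "sqrt (M1\<^sup>2) \<le> sqrt (k * N\<^sup>2)" using M1sq by (rule real_sqrt_le_mono)
    then show ?thesis using M1pos Npos by (simp add: real_sqrt_mult)
  qed
  define Pint where "Pint = (LINT s:{0<..}|lborel. \<mu> s * L2ip a b F (wderiv a b (\<eta> s)))"
  have Pb: "\<bar>Pint\<bar> \<le> \<phi> * M1"
  proof -
    have "\<bar>Pint\<bar> \<le> (LINT s:{0<..}|lborel. \<phi> * (\<mu> s * h s))"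
      unfolding Pint_def
    proof (rule set_abs_bound)
      show "set_integrable lborel {0<..} (\<lambda>s. \<phi> * (\<mu> s * h s))" using WCS(1) by simp
      fix s :: real assume s: "s \<in> {0<..}"
      have "\<bar>L2ip a b F (wderiv a b (\<eta> s))\<bar> \<le> \<phi> * h s"
        using L2ip_CS[OF FL H10_L2d[OF etas[OF s]]] by (simp add: \<phi>_def h_def norm1_def)
      then have "\<mu> s * \<bar>L2ip a b F (wderiv a b (\<eta> s))\<bar> \<le> \<mu> s * (\<phi> * h s)"
        using mpos[OF s] by (rule mult_left_mono)
      then show "\<bar>\<mu> s * L2ip a b F (wderiv a b (\<eta> s))\<bar> \<le> \<phi> * (\<mu> s * h s)"
        using mpos[OF s] by (simp add: abs_mult algebra_simps)
    qed
    then show ?thesis by (simp add: M1_def)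
  qed
  define U where "U = tnorm1 a b u"
  define c' where "c' = sqrt (1 + (b - a)\<^sup>2 / 8)"
  define Qint where "Qint = (LINT s:{0<..}|lborel. \<mu> s * ip1 a b u (\<eta> s))"
  have Qb: "\<bar>Qint\<bar> \<le> U * c' * M1"
  proof -
    have "\<bar>Qint\<bar> \<le> (LINT s:{0<..}|lborel. (U * c') * (\<mu> s * h s))"
      unfolding Qint_def
    proof (rule set_abs_bound)
      show "set_integrable lborel {0<..} (\<lambda>s. (U * c') * (\<mu> s * h s))" using WCS(1) by simp
      fix s :: real assume s: "s \<in> {0<..}"
      have "\<bar>ip1 a b u (\<eta> s)\<bar> \<le> U * c' * h s"
        using ip1_bound[OF u etas[OF s]] ab by (simp add: U_def c'_def h_def)
      then have "\<mu> s * \<bar>ip1 a b u (\<eta> s)\<bar> \<le> \<mu> s * (U * c' * h s)"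
        using mpos[OF s] by (rule mult_left_mono)
      then show "\<bar>\<mu> s * ip1 a b u (\<eta> s)\<bar> \<le> (U * c') * (\<mu> s * h s)"
        using mpos[OF s] by (simp add: abs_mult algebra_simps)
    qed
    then show ?thesis by (simp add: M1_def)
  qed
  have Hsq: "(Hnorm a b \<mu> z)\<^sup>2 = U\<^sup>2 + N\<^sup>2"
    by (simp add: Hnorm_def zz U_def N_def)
  have Lam: "Lambda a b \<mu> f e z = U\<^sup>2 + N\<^sup>2 + 2 / k * Pint + 2 / k * \<phi>\<^sup>2 - e / sqrt k * Qint" for e
    unfolding Lambda_def Let_def using Hsq by (simp add: zz F_def[symmetric] k_def[symmetric] Pint_def Qint_def \<phi>_def)
  define J where "J = Qint / sqrt k"
  define L0 where "L0 = U\<^sup>2 + N\<^sup>2 + 2 / k * Pint + 2 / k * \<phi>\<^sup>2"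
  have eqs: "\<forall>e. Lambda a b \<mu> f e z = Lambda a b \<mu> f 0 z - e * J"
    using Lam by (simp add: J_def)
  have L00: "Lambda a b \<mu> f 0 z = L0" using Lam[of 0] by (simp add: L0_def)
  show ?thesis
  proof (intro exI conjI)
    show "\<forall>e. Lambda a b \<mu> f e z = Lambda a b \<mu> f 0 z - e * J" by (rule eqs)
    define sk where "sk = sqrt k"
    have skpos: "sk > 0" using kpos by (simp add: sk_def)
    have ksk: "k = sk\<^sup>2" using kpos by (simp add: sk_def)
    define t where "t = M1 / sk"
    define x where "x = \<phi> / sk"
    have tpos: "0 \<le> t" using M1pos skpos by (simp add: t_def)
    have tN: "t \<le> N" using M1le skpos by (simp add: t_def sk_def[symmetric] field_simps)
    have Upos: "0 \<le> U" by (simp add: U_def tnorm1_nonneg)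
    have J1: "J \<le> U * c' * t"
    proof -
      have "J \<le> \<bar>Qint\<bar> / sk" unfolding J_def sk_def[symmetric] using skpos
        by (simp add: divide_right_mono)
      also have "\<dots> \<le> U * c' * M1 / sk" using Qb skpos by (simp add: divide_right_mono)
      finally show ?thesis by (simp add: t_def)
    qed
    have P1: "2 / k * Pint \<ge> - 2 * x * t"
    proof -
      have "Pint \<ge> - (\<phi> * M1)" using Pb by linarith
      then have "2 / k * Pint \<ge> 2 / k * (- (\<phi> * M1))" using kpos by (intro mult_left_mono) auto
      moreover have "2 / k * (- (\<phi> * M1)) = - 2 * x * t"
        using skpos by (simp add: ksk x_def t_def power2_eq_square field_simps)
      ultimately show ?thesis by simp
    qed
    have P2: "2 / k * \<phi>\<^sup>2 = 2 * x\<^sup>2" using skpos by (simp add: ksk x_def power2_eq_square field_simps)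
    have sq1: "0 \<le> 2 * (x - t / 2)\<^sup>2" by simp
    have sq1': "2 * (x - t / 2)\<^sup>2 = 2 * x\<^sup>2 - 2 * x * t + t\<^sup>2 / 2"
      by (simp add: power2_eq_square field_simps)
    have tN2: "t\<^sup>2 \<le> N\<^sup>2" using tpos tN by (simp add: power_mono)
    have L0b: "U\<^sup>2 + t\<^sup>2 / 2 \<le> L0"
      unfolding L0_def using P1 P2 sq1 sq1' tN2 by linarith
    have om: "c' \<le> sqrt 2 * omega a b" "0 < omega a b" using const_cmp[OF ab] by (simp_all add: c'_def)
    have J2: "U * c' * t \<le> omega a b * (sqrt 2 * U * t)"
    proof -
      have "U * t * c' \<le> U * t * (sqrt 2 * omega a b)"
        using om(1) Upos tpos by (intro mult_left_mono) auto
      then show ?thesis by (simp add: algebra_simps)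
    qed
    have J3: "sqrt 2 * U * t \<le> U\<^sup>2 + t\<^sup>2 / 2"
    proof -
      have "0 \<le> (sqrt 2 * U - t)\<^sup>2" by simp
      also have "\<dots> = 2 * U\<^sup>2 - 2 * (sqrt 2 * U * t) + t\<^sup>2"
        by (simp add: power2_eq_square algebra_simps)
      finally show ?thesis by linarith
    qed
    have "J \<le> omega a b * (U\<^sup>2 + t\<^sup>2 / 2)"
      using J1 J2 mult_left_mono[OF J3 less_imp_le[OF om(2)]] by linarith
    also have "\<dots> \<le> omega a b * L0" using L0b om(2) by (intro mult_left_mono) auto
    finally show "J \<le> omega a b * Lambda a b \<mu> f 0 z" using L00 by simp
  qed
qed

theorem lemma8p3:
  fixes a b :: real and f \<mu> :: "real \<Rightarrow> real"
    and c1 c2 c3 \<epsilon>0 \<epsilon> \<alpha> :: real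
    and S :: "real \<Rightarrow> state \<Rightarrow> state"
  assumes ab: "a < b"
    and f: "L2fun a b f"
    and mu: "kernel_ok \<mu>"
    and c_pos: "c1 > 0" "c2 > 0" "c3 > 0"
    and eps0: "0 < \<epsilon>0" "\<epsilon>0 < 1 / (2 * omega a b)"
    and S_maps: "\<And>t z. t \<ge> 0 \<Longrightarrow> z \<in> HH a b \<mu> \<Longrightarrow> S t z \<in> HH a b \<mu>"
    and S_0: "\<And>z. z \<in> HH a b \<mu> \<Longrightarrow> S 0 z = z"
    and S_semi: "\<And>t s z. t \<ge> 0 \<Longrightarrow> s \<ge> 0 \<Longrightarrow> z \<in> HH a b \<mu> \<Longrightarrow> S (t + s) z = S t (S s z)"
    and dissip: "\<And>z e t. z \<in> HH a b \<mu> \<Longrightarrow> 0 < e \<Longrightarrow> e \<le> \<epsilon>0 \<Longrightarrow> t \<ge> 0 \<Longrightarrow>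
        \<exists>L'. ((\<lambda>\<tau>. Lambda a b \<mu> f e (S \<tau> z)) has_real_derivative L') (at t within {0..}) \<and>
             L' + e * c1 * Lambda a b \<mu> f e (S t z)
               \<le> c2 * (L2norm a b (primF a f))\<^sup>2 + c3 * e\<^sup>2 * (Lambda a b \<mu> f e (S t z))\<^sup>2"
    and F_small: "L2norm a b (primF a f) < c1 / (2 * sqrt (c2 * c3))"
    and eps: "0 < \<epsilon>" "\<epsilon> \<le> \<epsilon>0"
    and alpha: "0 < \<alpha>" "\<alpha> \<le> \<epsilon> * (1 - omega a b * \<epsilon>)"
  shows "DD a b \<mu> f c1 c2 c3 \<epsilon> \<subseteq> DD a b \<mu> f c1 c2 c3 \<alpha>"
proof
  fix z assume zD: "z \<in> DD a b \<mu> f c1 c2 c3 \<epsilon>"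
  have zH: "z \<in> HH a b \<mu>" and zle: "Lambda a b \<mu> f \<epsilon> z \<le> cstar a b f c1 c2 c3 / \<epsilon>"
    using zD by (auto simp: DD_def)
  obtain J where eq: "\<And>e. Lambda a b \<mu> f e z = Lambda a b \<mu> f 0 z - e * J"
    and Jb: "J \<le> omega a b * Lambda a b \<mu> f 0 z"
    using key[OF ab f mu zH] by blast
  define L0 where "L0 = Lambda a b \<mu> f 0 z"
  define cs where "cs = cstar a b f c1 c2 c3"
  define \<omega> where "\<omega> = omega a b"
  have om: "0 < \<omega>" using const_cmp(2)[OF ab] by (simp add: \<omega>_def)
  have s23: "0 < sqrt (c2 * c3)" using c_pos by simp
  have cspos: "0 < cs"
  proof -
    have "c1 / (2 * sqrt (c2 * c3)) < c1 / sqrt (c2 * c3)" using s23 c_pos by (simp add: field_simps)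
    then have "0 < c1 / sqrt (c2 * c3) - L2norm a b (primF a f)" using F_small by linarith
    then show ?thesis using c_pos by (simp add: cs_def cstar_def)
  qed
  have eo: "\<epsilon> * \<omega> < 1"
  proof -
    have "\<epsilon> * \<omega> \<le> \<epsilon>0 * \<omega>" using eps om by (intro mult_right_mono) auto
    also have "\<dots> < 1 / (2 * \<omega>) * \<omega>" using eps0 om by (intro mult_strict_right_mono) (auto simp: \<omega>_def)
    also have "\<dots> = 1 / 2" using om by simp
    finally show ?thesis by simp
  qed
  define d where "d = 1 - \<omega> * \<epsilon>"
  have dpos: "0 < d" using eo by (simp add: d_def algebra_simps)
  have ad: "\<alpha> \<le> \<epsilon> * d" using alpha by (simp add: d_def \<omega>_def)
  have ae: "\<alpha> \<le> \<epsilon>"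
  proof -
    have "\<epsilon> * d \<le> \<epsilon>" using eps om by (simp add: d_def algebra_simps)
    then show ?thesis using ad by simp
  qed
  have goal: "Lambda a b \<mu> f \<alpha> z \<le> cs / \<alpha>"
  proof (cases "J \<le> 0")
    case True
    have "Lambda a b \<mu> f \<alpha> z \<le> Lambda a b \<mu> f \<epsilon> z"
    proof -
      have "\<epsilon> * J \<le> \<alpha> * J" using True ae by (intro mult_right_mono_neg) auto
      then show ?thesis using eq[of \<alpha>] eq[of \<epsilon>] by linarith
    qed
    also have "\<dots> \<le> cs / \<epsilon>" using zle by (simp add: cs_def)
    also have "\<dots> \<le> cs / \<alpha>" using cspos ae alpha by (intro divide_left_mono) auto
    finally show ?thesis .
  next
    case False
    then have Jpos: "0 < J" by simp
    have "0 < \<omega> * L0" using Jb Jpos by (simp add: L0_def \<omega>_def)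
    then have L0pos: "0 < L0" using om by (simp add: zero_less_mult_iff)
    have "\<epsilon> * J \<le> \<epsilon> * (\<omega> * L0)" using Jb eps by (intro mult_left_mono) (auto simp: L0_def \<omega>_def)
    then have "d * L0 \<le> Lambda a b \<mu> f \<epsilon> z"
      using eq[of \<epsilon>] by (simp add: d_def L0_def algebra_simps)
    then have "\<epsilon> * (d * L0) \<le> \<epsilon> * (cs / \<epsilon>)"
      using zle eps by (intro mult_left_mono) (auto simp: cs_def)
    then have A: "\<epsilon> * d * L0 \<le> cs" using eps by (simp add: algebra_simps)
    have "\<alpha> * L0 \<le> \<epsilon> * d * L0" using ad L0pos by (intro mult_right_mono) auto
    moreover have "\<alpha> * Lambda a b \<mu> f \<alpha> z \<le> \<alpha> * L0"
    proof -
      have "0 \<le> \<alpha> * J" using alpha Jpos by simp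
      then have "Lambda a b \<mu> f \<alpha> z \<le> L0" using eq[of \<alpha>] by (simp add: L0_def)
      then show ?thesis using alpha by (intro mult_left_mono) auto
    qed
    ultimately have "\<alpha> * Lambda a b \<mu> f \<alpha> z \<le> cs" using A by linarith
    then show ?thesis using alpha by (simp add: field_simps)
  qed
  show "z \<in> DD a b \<mu> f c1 c2 c3 \<alpha>" using zH goal by (simp add: DD_def cs_def)
qed

end
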